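(* Let $(t_i)_{i\in\mathbb{N}}$ be a sequence of real numbers that are algebraically independent over $\mathbb{Q}$, and let $A=\{P_{i,j} : i,j\in\mathbb{N},\ i<j\}\subseteq\mathbb{R}^2$, where $P_{i,j} = (t_i + t_j,\ t_i^2 + t_it_j + t_j^2)$. Then for every finite subset $P\subseteq A$ there exists $P'\subseteq P$ with $|P'|\ge |P|/2$ such that no three points of $P'$ are collinear. *)

theory Defs
  imports "HOL-Analysis.Analysis"
begin

text \<open>Multivariate polynomials
 with rational coefficients in the variables X_0, X_1, ... are represented explicitly:
 a monomial is an exponent vector e :: nat => nat with finite support, and a polynomial
 is a finite set E of monomials together with coefficients c.\<close>

definition monomial_val :: "(nat \<Rightarrow> real) \<Rightarrow> (nat \<Rightarrow> nat) \<Rightarrow> real" where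
  "monomial_val t e = (\<Prod>i\<in>{i. e i \<noteq> 0}. t i ^ e i)"

definition alg_indep_Q :: "(nat \<Rightarrow> real) \<Rightarrow> bool" where
  "alg_indep_Q t \<longleftrightarrow>
     (\<forall>(E :: (nat \<Rightarrow> nat) set) (c :: (nat \<Rightarrow> nat) \<Rightarrow> rat).
        finite E \<longrightarrow> (\<forall>e\<in>E. finite {i. e i \<noteq> 0}) \<longrightarrow>
        (\<Sum>e\<in>E. of_rat (c e) * monomial_val t e) = 0 \<longrightarrow> (\<forall>e\<in>E. c e = 0))"

definition point_set :: "(nat \<Rightarrow> real) \<Rightarrow> (real \<times> real) set" where
  "point_set t = {(t i + t j, (t i)^2 + t i * t j + (t j)^2) | i j. i < j}"

definition no_three_collinear :: "(real \<times> real) set \<Rightarrow> bool" where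
  "no_three_collinear S \<longleftrightarrow> (\<forall>T\<subseteq>S. card T = 3 \<longrightarrow> \<not> collinear T)"

end

theory Submission
  imports Defs
begin


definition polyrep :: "((nat \<Rightarrow> real) \<Rightarrow> real) \<Rightarrow> bool" where
  "polyrep F \<longleftrightarrow> (\<exists>E c. finite E \<and> (\<forall>e\<in>E. finite {i. e i \<noteq> 0}) \<and>
      (\<forall>s. F s = (\<Sum>e\<in>E. of_rat (c e) * monomial_val s e)))"

lemma mv_superset:
  assumes "finite S" "{i. g i \<noteq> 0} \<subseteq> S"
  shows "monomial_val s g = (\<Prod>i\<in>S. s i ^ g i)"
  unfolding monomial_val_def
  by (rule prod.mono_neutral_left[OF assms]) auto

lemma mv_add:
  assumes "finite {i. e i \<noteq> 0}" "finite {i. f i \<noteq> 0}"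
  shows "monomial_val s (\<lambda>i. e i + f i) = monomial_val s e * monomial_val s f"
proof -
  let ?S = "{i. e i \<noteq> 0} \<union> {i. f i \<noteq> 0}"
  have fS: "finite ?S" using assms by auto
  have "monomial_val s (\<lambda>i. e i + f i) = (\<Prod>i\<in>?S. s i ^ (e i + f i))"
    by (rule mv_superset[OF fS]) auto
  also have "\<dots> = (\<Prod>i\<in>?S. s i ^ e i) * (\<Prod>i\<in>?S. s i ^ f i)"
    by (simp add: power_add prod.distrib)
  also have "\<dots> = monomial_val s e * monomial_val s f"
    using mv_superset[OF fS, of e s] mv_superset[OF fS, of f s] by auto
  finally show ?thesis .
qed

lemma polyrep_transfer:
  assumes "alg_indep_Q t" "polyrep F" "F t = 0"
  shows "F s = 0"
proof -
  obtain E c where E: "finite E" "\<forall>e\<in>E. finite {i. e i \<noteq> 0}"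
    "\<forall>s. F s = (\<Sum>e\<in>E. of_rat (c e) * monomial_val s e)"
    using assms(2) unfolding polyrep_def by blast
  have "\<forall>e\<in>E. c e = 0" using assms(1) E assms(3) unfolding alg_indep_Q_def by metis
  then show ?thesis using E(3) by simp
qed

lemma polyrep_const: "polyrep (\<lambda>s. of_rat r)"
  unfolding polyrep_def
  by (rule exI[of _ "{\<lambda>i. 0}"], rule exI[of _ "\<lambda>_. r"]) (simp add: monomial_val_def)

lemma polyrep_var: "polyrep (\<lambda>s. s k)"
  unfolding polyrep_def
proof (rule exI[of _ "{\<lambda>i. if i = k then 1 else 0}"], rule exI[of _ "\<lambda>_. 1"], intro conjI allI)
  fix s :: "nat \<Rightarrow> real"
  have "{i. (if i = k then 1 else 0::nat) \<noteq> 0} = {k}" by auto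
  then show "s k = (\<Sum>e\<in>{\<lambda>i. if i = k then 1 else 0}. of_rat 1 * monomial_val s e)"
    by (simp add: monomial_val_def)
qed auto

lemma polyrep_neg: "polyrep F \<Longrightarrow> polyrep (\<lambda>s. - F s)"
  unfolding polyrep_def
  apply clarify
  subgoal for E c
    by (rule exI[of _ E], rule exI[of _ "\<lambda>e. - c e"]) (simp add: of_rat_minus sum_negf)
  done

lemma polyrep_add: 
  assumes "polyrep F" "polyrep G" shows "polyrep (\<lambda>s. F s + G s)"
proof -
  obtain E1 c1 where E1: "finite E1" "\<forall>e\<in>E1. finite {i. e i \<noteq> 0}"
    "\<forall>s. F s = (\<Sum>e\<in>E1. of_rat (c1 e) * monomial_val s e)"
    using assms(1) unfolding polyrep_def by blast
  obtain E2 c2 where E2: "finite E2" "\<forall>e\<in>E2. finite {i. e i \<noteq> 0}"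
    "\<forall>s. G s = (\<Sum>e\<in>E2. of_rat (c2 e) * monomial_val s e)"
    using assms(2) unfolding polyrep_def by blast
  define c where "c e = (if e \<in> E1 then c1 e else 0) + (if e \<in> E2 then c2 e else 0)" for e
  have fU: "finite (E1 \<union> E2)" using E1 E2 by auto
  have "F s + G s = (\<Sum>e\<in>E1 \<union> E2. of_rat (c e) * monomial_val s e)" for s
  proof -
    have a: "(\<Sum>e\<in>E1 \<union> E2. of_rat (if e \<in> E1 then c1 e else 0) * monomial_val s e)
        = (\<Sum>e\<in>E1. of_rat (c1 e) * monomial_val s e)"
      by (rule sum.mono_neutral_cong_right) (use fU in auto)
    have b: "(\<Sum>e\<in>E1 \<union> E2. of_rat (if e \<in> E2 then c2 e else 0) * monomial_val s e)
        = (\<Sum>e\<in>E2. of_rat (c2 e) * monomial_val s e)"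
      by (rule sum.mono_neutral_cong_right) (use fU in auto)
    show ?thesis unfolding c_def of_rat_add distrib_right sum.distrib a b using E1(3) E2(3) by simp
  qed
  then show ?thesis unfolding polyrep_def using fU E1(2) E2(2) by blast
qed

lemma polyrep_mult: 
  assumes "polyrep F" "polyrep G" shows "polyrep (\<lambda>s. F s * G s)"
proof -
  obtain E1 c1 where E1: "finite E1" "\<forall>e\<in>E1. finite {i. e i \<noteq> 0}"
    "\<forall>s. F s = (\<Sum>e\<in>E1. of_rat (c1 e) * monomial_val s e)"
    using assms(1) unfolding polyrep_def by blast
  obtain E2 c2 where E2: "finite E2" "\<forall>e\<in>E2. finite {i. e i \<noteq> 0}"
    "\<forall>s. G s = (\<Sum>e\<in>E2. of_rat (c2 e) * monomial_val s e)"
    using assms(2) unfolding polyrep_def by blast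
  define pl where "pl = (\<lambda>(a::nat\<Rightarrow>nat, b::nat\<Rightarrow>nat). (\<lambda>i. a i + b i))"
  define S where "S = E1 \<times> E2"
  define E where "E = pl ` S"
  define h where "h = (\<lambda>(a,b). c1 a * c2 b)"
  define c where "c e = (\<Sum>p\<in>{p. p \<in> S \<and> pl p = e}. h p)" for e
  have fS: "finite S" using E1 E2 S_def by auto
  have fE: "finite E" using fS E_def by auto
  have suppE: "\<forall>e\<in>E. finite {i. e i \<noteq> 0}"
  proof
    fix e assume "e \<in> E"
    then obtain a b where ab: "a \<in> E1" "b \<in> E2" "e = (\<lambda>i. a i + b i)"
      unfolding E_def S_def pl_def by auto
    have "{i. e i \<noteq> 0} \<subseteq> {i. a i \<noteq> 0} \<union> {i. b i \<noteq> 0}" using ab by auto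
    then show "finite {i. e i \<noteq> 0}" using ab E1(2) E2(2) finite_subset by blast
  qed
  have key: "F s * G s = (\<Sum>e\<in>E. of_rat (c e) * monomial_val s e)" for s
  proof -
    have mvp: "monomial_val s (pl p) = monomial_val s (fst p) * monomial_val s (snd p)" if "p \<in> S" for p
      using that E1(2) E2(2) mv_add unfolding S_def pl_def by (auto split: prod.splits)
    have "F s * G s = (\<Sum>a\<in>E1. \<Sum>b\<in>E2. (of_rat (c1 a) * monomial_val s a) * (of_rat (c2 b) * monomial_val s b))"
      unfolding sum_product[symmetric] using E1(3) E2(3) by simp
    also have "\<dots> = (\<Sum>p\<in>S. of_rat (h p) * monomial_val s (pl p))"
      unfolding sum.cartesian_product S_def
      by (rule sum.cong) (use mvp[unfolded S_def] in \<open>auto simp: h_def of_rat_mult\<close>)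
    also have "\<dots> = (\<Sum>e\<in>E. \<Sum>p\<in>{p. p \<in> S \<and> pl p = e}. of_rat (h p) * monomial_val s (pl p))"
      by (rule sum.group[symmetric]) (use fS fE E_def in auto)
    also have "\<dots> = (\<Sum>e\<in>E. of_rat (c e) * monomial_val s e)"
      unfolding c_def of_rat_sum sum_distrib_right by (rule sum.cong) auto
    finally show ?thesis .
  qed
  show ?thesis unfolding polyrep_def using fE suppE key by blast
qed

lemma polyrep_diff: "polyrep F \<Longrightarrow> polyrep G \<Longrightarrow> polyrep (\<lambda>s. F s - G s)"
  using polyrep_add[OF _ polyrep_neg, of F G] by simp

lemma polyrep_pow: "polyrep F \<Longrightarrow> polyrep (\<lambda>s. F s ^ n)"
proof (induction n)
  case 0 then show ?case using polyrep_const[of 1] by simp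
next
  case (Suc n) then show ?case using polyrep_mult[OF Suc(2) Suc(1)] by simp
qed

lemmas polyrep_intros = polyrep_var polyrep_add polyrep_mult polyrep_diff polyrep_pow polyrep_neg



definition Q :: "(nat \<Rightarrow> real) \<Rightarrow> nat \<Rightarrow> nat \<Rightarrow> real \<times> real" where
  "Q s i j = (s i + s j, (s i)^2 + s i * s j + (s j)^2)"

definition det3 :: "real \<times> real \<Rightarrow> real \<times> real \<Rightarrow> real \<times> real \<Rightarrow> real" where
  "det3 p q r = (fst p - fst q) * (snd r - snd q) - (fst r - fst q) * (snd p - snd q)"

lemma collinear_det3:
  assumes "collinear {p, q, r :: real \<times> real}" shows "det3 p q r = 0"
proof -
  obtain u where u: "\<forall>x\<in>{p,q,r}. \<forall>y\<in>{p,q,r}. \<exists>c. x - y = c *\<^sub>R u"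
    using assms unfolding collinear_def by blast
  obtain c1 where c1: "p - q = c1 *\<^sub>R u" using u by blast
  obtain c2 where c2: "r - q = c2 *\<^sub>R u" using u by blast
  have "fst p - fst q = c1 * fst u" "snd p - snd q = c1 * snd u"
    using arg_cong[OF c1, of fst] arg_cong[OF c1, of snd] by auto
  moreover have "fst r - fst q = c2 * fst u" "snd r - snd q = c2 * snd u"
    using arg_cong[OF c2, of fst] arg_cong[OF c2, of snd] by auto
  ultimately show ?thesis unfolding det3_def by simp
qed

lemma Q_comm: "Q s i j = Q s j i"
  unfolding Q_def by (simp add: algebra_simps)

lemma noncol:
  assumes "alg_indep_Q t" "det3 (Q s0 a b) (Q s0 c d) (Q s0 x y) \<noteq> 0"
  shows "\<not> collinear {Q t a b, Q t c d, Q t x y}"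
proof
  assume "collinear {Q t a b, Q t c d, Q t x y}"
  then have "det3 (Q t a b) (Q t c d) (Q t x y) = 0" by (rule collinear_det3)
  moreover have "polyrep (\<lambda>s. det3 (Q s a b) (Q s c d) (Q s x y))"
    unfolding det3_def Q_def fst_conv snd_conv by (intro polyrep_intros)
  ultimately have "det3 (Q s0 a b) (Q s0 c d) (Q s0 x y) = 0"
    using polyrep_transfer[OF assms(1), of "\<lambda>s. det3 (Q s a b) (Q s c d) (Q s x y)"] by blast
  then show False using assms(2) by simp
qed

lemma t_inj:
  assumes "alg_indep_Q t" "i \<noteq> j" shows "t i \<noteq> t j"
proof
  assume "t i = t j"
  then have "t i - t j = 0" by simp
  moreover have "polyrep (\<lambda>s. s i - s j)" by (intro polyrep_intros)
  ultimately have "((\<lambda>_. 0)(i := 1)) i - ((\<lambda>_. 0)(i := 1)) j = (0::real)"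
    using polyrep_transfer[OF assms(1), of "\<lambda>s. s i - s j"] by blast
  then show False using assms(2) by simp
qed

lemma col_star:
  assumes "alg_indep_Q t" "distinct [a,b,c,d]"
  shows "\<not> collinear {Q t a b, Q t a c, Q t a d}"
  by (rule noncol[OF assms(1), of "(\<lambda>_. 0)(b := 1, c := 2, d := 3)"])
     (use assms(2) in \<open>simp add: Q_def det3_def\<close>)

lemma col_P4:
  assumes "alg_indep_Q t" "distinct [a,b,c,d]"
  shows "\<not> collinear {Q t c a, Q t a b, Q t b d}"
  by (rule noncol[OF assms(1), of "(\<lambda>_. 0)(b := 1, c := 2, d := 3)"])
     (use assms(2) in \<open>simp add: Q_def det3_def\<close>)

lemma col_P3K2:
  assumes "alg_indep_Q t" "distinct [a,b,c,d,e]"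
  shows "\<not> collinear {Q t b a, Q t a c, Q t d e}"
  by (rule noncol[OF assms(1), of "(\<lambda>_. 0)(b := 1, c := 2, d := 3, e := 5)"])
     (use assms(2) in \<open>simp add: Q_def det3_def\<close>)

lemma col_M:
  assumes "alg_indep_Q t" "distinct [a,b,c,d,e,f]"
  shows "\<not> collinear {Q t a b, Q t c d, Q t e f}"
  by (rule noncol[OF assms(1), of "(\<lambda>_. 0)(b := 1, c := 2, d := 3, e := 5, f := 7)"])
     (use assms(2) in \<open>simp add: Q_def det3_def\<close>)



lemma Q_set: "{a,b} = {c,d} \<Longrightarrow> Q s a b = Q s c d"
  by (metis Q_comm doubleton_eq_iff)

lemma two_share:
  assumes ai: "alg_indep_Q t" and dist: "distinct [u,v,w]" and xy: "x \<noteq> y"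
    and n1: "{x,y} \<noteq> {u,v}" and n2: "{x,y} \<noteq> {u,w}" and n3: "{x,y} \<noteq> {v,w}"
  shows "\<not> collinear {Q t u v, Q t u w, Q t x y}"
proof -
  consider (a) "u \<in> {x,y}" | (b) "v \<in> {x,y}" "u \<notin> {x,y}"
    | (c) "w \<in> {x,y}" "u \<notin> {x,y}" "v \<notin> {x,y}"
    | (d) "u \<notin> {x,y}" "v \<notin> {x,y}" "w \<notin> {x,y}" by blast
  then show ?thesis
  proof cases
    case a
    define d where "d = (if x = u then y else x)"
    have e: "{x,y} = {u,d}" using a d_def by auto
    have d1: "d \<noteq> u" using xy by (auto simp: d_def)
    have d2: "d \<noteq> v" "d \<noteq> w" using e n1 n2 by auto
    have "distinct [u,v,w,d]" using d1 d2 dist by auto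
    from col_star[OF ai this] show ?thesis by (simp add: Q_set[OF e])
  next
    case b
    define d where "d = (if x = v then y else x)"
    have e: "{x,y} = {v,d}" using b d_def by auto
    have d1: "d \<in> {x,y}" "d \<noteq> v" using xy by (auto simp: d_def)
    have d2: "d \<noteq> w" using e n3 by auto
    have di: "distinct [u,v,w,d]" using d1 d2 b(2) dist by auto
    have "\<not> collinear {Q t w u, Q t u v, Q t v d}" by (rule col_P4[OF ai di])
    then have "\<not> collinear {Q t u w, Q t u v, Q t x y}" by (simp add: Q_comm[of t w u] Q_set[OF e])
    moreover have "{Q t u w, Q t u v, Q t x y} = {Q t u v, Q t u w, Q t x y}" by auto
    ultimately show ?thesis by simp
  next
    case c
    define d where "d = (if x = w then y else x)"
    have e: "{x,y} = {w,d}" using c d_def by auto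
    have d1: "d \<in> {x,y}" "d \<noteq> w" using xy by (auto simp: d_def)
    have di: "distinct [u,w,v,d]" using d1 c(2,3) dist by auto
    have "\<not> collinear {Q t v u, Q t u w, Q t w d}" by (rule col_P4[OF ai di])
    then show ?thesis by (simp add: Q_comm[of t v u] Q_set[OF e])
  next
    case d
    have di: "distinct [u,v,w,x,y]" using d dist xy by auto
    have "\<not> collinear {Q t v u, Q t u w, Q t x y}" by (rule col_P3K2[OF ai di])
    then show ?thesis by (simp add: Q_comm[of t v u])
  qed
qed
definition cross :: "nat set \<Rightarrow> nat \<Rightarrow> nat \<Rightarrow> bool" where
  "cross X i j \<longleftrightarrow> (i \<in> X) \<noteq> (j \<in> X)"

lemma share:
  assumes ai: "alg_indep_Q t" and ne: "{a,b} \<inter> {c,d} \<noteq> {}"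
    and ab: "a \<noteq> b" "c \<noteq> d" "x \<noteq> y" and s1: "{a,b} \<noteq> {c,d}"
    and s2: "{a,b} \<noteq> {x,y}" and s3: "{c,d} \<noteq> {x,y}"
    and cr: "cross X a b" "cross X c d" "cross X x y"
  shows "\<not> collinear {Q t a b, Q t c d, Q t x y}"
proof -
  have "\<exists>u v w. {a,b} = {u,v} \<and> {c,d} = {u,w}"
  proof -
    consider "a = c" | "a = d" | "b = c" | "b = d" using ne by blast
    then show ?thesis
    proof cases
      case 1 then show ?thesis by blast
    next
      case 2 then show ?thesis by (metis insert_commute)
    next
      case 3 then show ?thesis by (metis insert_commute)
    next
      case 4 then show ?thesis by (metis insert_commute)
    qed
  qed
  then obtain u v w where e1: "{a,b} = {u,v}" and e2: "{c,d} = {u,w}" by blast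
  have uv: "u \<noteq> v" using e1 ab(1) by (metis doubleton_eq_iff)
  have uw: "u \<noteq> w" using e2 ab(2) by (metis doubleton_eq_iff)
  have vw: "v \<noteq> w" using e1 e2 s1 by metis
  have dist: "distinct [u,v,w]" using uv uw vw by simp
  have cuv: "cross X u v" "cross X u w" using cr(1,2) e1 e2
    by (auto simp: doubleton_eq_iff cross_def)
  have n3: "{x,y} \<noteq> {v,w}"
  proof
    assume "{x,y} = {v,w}"
    then have "cross X v w" using cr(3) by (auto simp: doubleton_eq_iff cross_def)
    then show False using cuv by (auto simp: cross_def)
  qed
  have "\<not> collinear {Q t u v, Q t u w, Q t x y}"
    by (rule two_share[OF ai dist ab(3)]) (use s2 s3 e1 e2 n3 in auto)
  then show ?thesis using Q_set[OF e1] Q_set[OF e2] by simp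
qed

lemma tri:
  assumes ai: "alg_indep_Q t"
    and ab: "a \<noteq> b" "c \<noteq> d" "x \<noteq> y" and s1: "{a,b} \<noteq> {c,d}"
    and s2: "{a,b} \<noteq> {x,y}" and s3: "{c,d} \<noteq> {x,y}"
    and cr: "cross X a b" "cross X c d" "cross X x y"
  shows "\<not> collinear {Q t a b, Q t c d, Q t x y}"
proof (cases "{a,b} \<inter> {c,d} \<noteq> {}")
  case True then show ?thesis using share[OF ai True ab s1 s2 s3 cr] by blast
next
  case F1: False
  show ?thesis
  proof (cases "{a,b} \<inter> {x,y} \<noteq> {}")
    case True
    have "\<not> collinear {Q t a b, Q t x y, Q t c d}"
      using share[OF ai True ab(1,3,2) s2 s1 s3[symmetric] cr(1,3,2)] by blast
    then show ?thesis by (simp add: insert_commute)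
  next
    case F2: False
    show ?thesis
    proof (cases "{c,d} \<inter> {x,y} \<noteq> {}")
      case True
      have "\<not> collinear {Q t c d, Q t x y, Q t a b}"
        using share[OF ai True ab(2,3,1) s3 s1[symmetric] s2[symmetric] cr(2,3,1)] by blast
      then show ?thesis by (simp add: insert_commute)
    next
      case False
      have "distinct [a,b,c,d,x,y]" using F1 F2 False ab by auto
      then show ?thesis using col_M[OF ai] by blast
    qed
  qed
qed

definition cr :: "nat set \<Rightarrow> (nat \<times> nat) set \<Rightarrow> (nat \<times> nat) set" where
  "cr X E = {p\<in>E. cross X (fst p) (snd p)}"

lemma maxcut_aux:
  "E \<subseteq> {p. fst p < snd p \<and> snd p < n} \<Longrightarrow> \<exists>X. card E \<le> 2 * card (cr X E)"
proof (induction n arbitrary: E)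
  case 0 then show ?case by auto
next
  case (Suc n)
  define E1 where "E1 = {p\<in>E. snd p < n}"
  define E2 where "E2 = {p\<in>E. snd p = n}"
  have fE: "finite E"
    by (rule finite_subset[OF Suc.prems, of ], rule finite_subset[of _ "{..<Suc n} \<times> {..<Suc n}"]) auto
  have E12: "E = E1 \<union> E2" "E1 \<inter> E2 = {}" using Suc.prems unfolding E1_def E2_def by auto
  have fE1: "finite E1" "finite E2" using fE E12 by auto
  obtain X where X: "card E1 \<le> 2 * card (cr X E1)"
  proof -
    have "E1 \<subseteq> {p. fst p < snd p \<and> snd p < n}" using Suc.prems unfolding E1_def by auto
    then show ?thesis using Suc.IH[of E1] that by blast
  qed
  define A where "A = {p\<in>E2. fst p \<in> X}"
  define B where "B = {p\<in>E2. fst p \<notin> X}"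
  have cE2: "card E2 = card A + card B"
  proof -
    have "E2 = A \<union> B" "A \<inter> B = {}" unfolding A_def B_def by auto
    then show ?thesis using fE1(2) card_Un_disjoint[of A B] by (metis finite_Un)
  qed
  have cE: "card E = card E1 + card E2" using E12 fE1 card_Un_disjoint by metis
  have same: "cr X' E1 = cr X E1" if "X' \<inter> {..<n} = X \<inter> {..<n}" for X'
  proof -
    have "cross X' (fst p) (snd p) = cross X (fst p) (snd p)" if "p \<in> E1" for p
    proof -
      have "fst p < n" "snd p < n" using \<open>p \<in> E1\<close> Suc.prems unfolding E1_def by auto
      then show ?thesis using \<open>X' \<inter> {..<n} = X \<inter> {..<n}\<close> unfolding cross_def by blast
    qed
    then show ?thesis unfolding cr_def by auto
  qed
  have split: "card (cr X' E) = card (cr X' E1) + card (cr X' E2)" for X'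
  proof -
    have "cr X' E = cr X' E1 \<union> cr X' E2" "cr X' E1 \<inter> cr X' E2 = {}"
      using E12 unfolding cr_def by auto
    moreover have "finite (cr X' E1)" "finite (cr X' E2)" using fE1 unfolding cr_def by auto
    ultimately show ?thesis using card_Un_disjoint by metis
  qed
  have fstlt: "fst p < n" "snd p = n" if "p \<in> E2" for p using that Suc.prems unfolding E2_def by auto
  show ?case
  proof (cases "card B \<le> card A")
    case True
    define X' where "X' = X - {n}"
    have "X' \<inter> {..<n} = X \<inter> {..<n}" unfolding X'_def by auto
    then have s1: "cr X' E1 = cr X E1" by (rule same)
    have s2: "cr X' E2 = A"
      unfolding cr_def A_def cross_def X'_def using fstlt by fastforce
    have "card (cr X' E) = card (cr X E1) + card A" using split[of X'] unfolding s1 s2 .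
    then show ?thesis using X True cE cE2 by (intro exI[of _ X']) linarith
  next
    case False
    define X' where "X' = insert n X"
    have "X' \<inter> {..<n} = X \<inter> {..<n}" unfolding X'_def by auto
    then have s1: "cr X' E1 = cr X E1" by (rule same)
    have s2: "cr X' E2 = B"
      unfolding cr_def B_def cross_def X'_def using fstlt by fastforce
    have "card (cr X' E) = card (cr X E1) + card B" using split[of X'] unfolding s1 s2 .
    then show ?thesis using X False cE cE2 by (intro exI[of _ X']) linarith
  qed
qed

lemma maxcut:
  assumes "finite E" "E \<subseteq> {p. fst p < snd p}"
  shows "\<exists>X. card E \<le> 2 * card (cr X E)"
proof -
  obtain n where "\<forall>p\<in>E. snd p < n"
    using assms(1) by (metis finite_nat_set_iff_bounded finite_imageI imageI)
  then show ?thesis using maxcut_aux[of E n] assms(2) by auto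
qed



lemma Q_inj:
  assumes ai: "alg_indep_Q t" and lt: "i < j" "k < l" and eq: "Q t i j = Q t k l"
  shows "i = k \<and> j = l"
proof -
  have s: "t i + t j = t k + t l" and q: "(t i)^2 + t i * t j + (t j)^2 = (t k)^2 + t k * t l + (t l)^2"
    using eq unfolding Q_def by auto
  have p1: "t k * t l = (t k + t l)^2 - ((t k)^2 + t k * t l + (t l)^2)" by (simp add: power2_eq_square algebra_simps)
  have p2: "t i * t j = (t i + t j)^2 - ((t i)^2 + t i * t j + (t j)^2)" by (simp add: power2_eq_square algebra_simps)
  have p: "t k * t l = t i * t j" using p1 p2 s q by simp
  have "(t i - t k) * (t i - t l) = (t i)^2 - t i * (t k + t l) + t k * t l"
    by (simp add: power2_eq_square algebra_simps)
  also have "\<dots> = 0" unfolding p s[symmetric] by (simp add: power2_eq_square algebra_simps)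
  finally have "t i = t k \<or> t i = t l" by simp
  then have "i = k \<or> i = l" using t_inj[OF ai] by blast
  then show ?thesis
  proof
    assume "i = k"
    then have "t j = t l" using s by simp
    then show ?thesis using t_inj[OF ai] \<open>i = k\<close> by blast
  next
    assume "i = l"
    then have "t j = t k" using s by simp
    then have "j = k" using t_inj[OF ai] by blast
    then show ?thesis using lt \<open>i = l\<close> by simp
  qed
qed

theorem mainTheorem3:
  fixes t :: "nat \<Rightarrow> real"
  assumes "alg_indep_Q t"
  shows "\<forall>P \<subseteq> point_set t. finite P \<longrightarrow>
           (\<exists>P' \<subseteq> P. real (card P') \<ge> real (card P) / 2 \<and> no_three_collinear P')"
proof (intro allI impI)
  fix P assume PS: "P \<subseteq> point_set t" and fP: "finite P"
  note ai = assms
  define pt where "pt = (\<lambda>p. Q t (fst p) (snd p))"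
  define E where "E = {p. fst p < snd p \<and> pt p \<in> P}"
  have inj: "inj_on pt {p. fst p < snd p}"
    unfolding inj_on_def pt_def using Q_inj[OF ai] by (metis mem_Collect_eq prod.expand)
  have injE: "inj_on pt E" by (rule inj_on_subset[OF inj]) (auto simp: E_def)
  have PE: "P = pt ` E"
  proof
    show "P \<subseteq> pt ` E"
    proof
      fix x assume "x \<in> P"
      then obtain i j where "i < j" "x = Q t i j" using PS unfolding point_set_def Q_def by blast
      then show "x \<in> pt ` E" using \<open>x \<in> P\<close> unfolding E_def pt_def
        by (intro image_eqI[of _ _ "(i,j)"]) auto
    qed
  qed (auto simp: E_def)
  have fE: "finite E" using finite_imageD[OF _ injE] fP PE by simp
  obtain X where X: "card E \<le> 2 * card (cr X E)"
    using maxcut[OF fE] unfolding E_def by auto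
  define P' where "P' = pt ` cr X E"
  have sub: "cr X E \<subseteq> E" unfolding cr_def by auto
  have cP': "card P' = card (cr X E)" unfolding P'_def
    by (rule card_image[OF inj_on_subset[OF injE sub]])
  have cP: "card P = card E" unfolding PE by (rule card_image[OF injE])
  have "P' \<subseteq> P" unfolding P'_def PE using sub by auto
  moreover have "real (card P') \<ge> real (card P) / 2" using X cP cP' by simp
  moreover have "no_three_collinear P'"
    unfolding no_three_collinear_def
  proof (intro allI impI)
    fix T assume TP: "T \<subseteq> P'" and c3: "card T = 3"
    obtain p1 p2 p3 where T: "T = {p1,p2,p3}" "p1 \<noteq> p2" "p2 \<noteq> p3" "p1 \<noteq> p3"
      using c3 card_3_iff by metis
    have mem: "p1 \<in> P'" "p2 \<in> P'" "p3 \<in> P'" using TP T by auto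
    obtain a b where e1: "(a,b) \<in> cr X E" "p1 = Q t a b" using mem(1) unfolding P'_def pt_def by auto
    obtain c d where e2: "(c,d) \<in> cr X E" "p2 = Q t c d" using mem(2) unfolding P'_def pt_def by auto
    obtain x y where e3: "(x,y) \<in> cr X E" "p3 = Q t x y" using mem(3) unfolding P'_def pt_def by auto
    have lt: "a < b" "c < d" "x < y" using e1 e2 e3 unfolding cr_def E_def by auto
    have cr: "cross X a b" "cross X c d" "cross X x y" using e1 e2 e3 unfolding cr_def by auto
    have setne: "{a',b'} \<noteq> {c',d'}" if "a' < b'" "c' < d'" "Q t a' b' \<noteq> Q t c' d'" for a' b' c' d'
      using that by (auto simp: doubleton_eq_iff)
    have "\<not> collinear {Q t a b, Q t c d, Q t x y}"
      by (rule tri[OF ai _ _ _ _ _ _ cr]) (use lt setne T e1 e2 e3 in auto)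
    then show "\<not> collinear T" using T e1 e2 e3 by simp
  qed
  ultimately show "\<exists>P' \<subseteq> P. real (card P') \<ge> real (card P) / 2 \<and> no_three_collinear P'" by blast
qed

end
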